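(* Let $\omega\ge1$, $n\ge1$, and $0\le A_i,B_i<2^\omega$ for $0\le i\le n-1$. Let $c_0=0$ and $c_{i+1}=\lfloor (A_i+B_i+c_i)/2^\omega\rfloor$. Suppose $\mathsf t_i,\mathsf p_i\in\{0,\dots,255\}$ are such that for each $i$ the case of $(\mathsf t_i,\mathsf p_i)$ with respect to base $256$ equals the case of $(A_i,B_i)$ with respect to base $2^\omega$. Let $\mathsf s_0,\dots,\mathsf s_{n-1}\in\{0,\dots,255\}$ be defined by $\sum_{i=0}^{n-1}256^i\mathsf s_i=\big(\sum_{i=0}^{n-1}256^i\mathsf t_i+\sum_{i=0}^{n-1}256^i\mathsf p_i\big)\bmod 256^n$. Then for every $0\le i\le n-1$, $(\mathsf s_i-\mathsf t_i-\mathsf p_i)\bmod 256=c_i$.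
   Context: For a base $b\ge2$ and integers $0\le x,y<b$, the case of $(x,y)$ with respect to base $b$ is $\mathbf N$ if $x+y\le b-2$, $\mathbf P$ if $x+y=b-1$, and $\mathbf G$ if $x+y\ge b$. *)

theory Defs
  imports Main
begin

datatype digit_case = CaseN | CaseP | CaseG

text \<open>Case of (x,y) w.r.t. base b (intended for 0 <= x,y < b, b >= 2).\<close>
definition case_of :: "nat \<Rightarrow> nat \<Rightarrow> nat \<Rightarrow> digit_case" where
  "case_of b x y = (if x + y + 2 \<le> b then CaseN
                    else if x + y + 1 = b then CaseP
                    else CaseG)"

end

theory Submission
  imports Defs
begin

lemma digsum_lt:
  fixes b :: nat
  assumes "b > 0" "\<forall>i<n. x i < b"
  shows "(\<Sum>i<n. b^i * x i) < b^n"
  using assms(2)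
proof (induction n)
  case 0 then show ?case by simp
next
  case (Suc n)
  have S: "(\<Sum>i<n. b^i * x i) < b^n" using Suc by simp
  have "x n \<le> b - 1" using Suc.prems by force
  then have "b^n * x n \<le> b^n * (b - 1)" by simp
  moreover have "b^n + b^n * (b - 1) = b^n * b" using assms(1)
    by (metis Suc_diff_1 mult_Suc_right add.commute)
  ultimately have "(\<Sum>i<n. b^i * x i) + b^n * x n < b^n * b" using S by linarith
  then show ?case by (simp add: mult.commute)
qed

lemma digsum_inj:
  fixes b :: nat
  assumes "b > 0"
  shows "\<forall>i<n. x i < b \<Longrightarrow> \<forall>i<n. y i < b \<Longrightarrow>
    (\<Sum>i<n. b^i * x i) = (\<Sum>i<n. b^i * y i) \<Longrightarrow> \<forall>i<n. x i = y i"
proof (induction n)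
  case 0 then show ?case by simp
next
  case (Suc n)
  let ?X = "(\<Sum>i<n. b^i * x i)" and ?Y = "(\<Sum>i<n. b^i * y i)"
  have X: "?X < b^n" using digsum_lt[OF assms, of n x] Suc.prems by simp
  have Y: "?Y < b^n" using digsum_lt[OF assms, of n y] Suc.prems by simp
  have E: "?X + b^n * x n = ?Y + b^n * y n" using Suc.prems(3) by simp
  have "(?X + b^n * x n) mod b^n = ?X" using X by simp
  moreover have "(?Y + b^n * y n) mod b^n = ?Y" using Y by simp
  ultimately have XY: "?X = ?Y" using E by metis
  then have "b^n * x n = b^n * y n" using E by simp
  then have "x n = y n" using assms by simp
  moreover have "\<forall>i<n. x i = y i" using Suc XY by simp
  ultimately show ?case by (metis less_Suc_eq)
qed

fun bc :: "(nat\<Rightarrow>nat)\<Rightarrow>(nat\<Rightarrow>nat)\<Rightarrow>nat\<Rightarrow>nat" where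
  "bc t p 0 = 0"
| "bc t p (Suc i) = (t i + p i + bc t p i) div 256"

lemma expand:
  "(\<Sum>i<m. 256^i*t i) + (\<Sum>i<m. 256^i*p i) =
   (\<Sum>i<m. 256^i*((t i+p i+bc t p i) mod 256)) + 256^m * bc t p m"
proof (induction m)
  case 0 then show ?case by simp
next
  case (Suc m)
  let ?r = "t m + p m + bc t p m"
  have "(256::nat)^m * (?r mod 256) + 256^Suc m * (?r div 256) = 256^m * ?r"
  proof -
    have "(256::nat)^m * (?r mod 256) + 256^Suc m * (?r div 256)
        = 256^m * (?r mod 256 + 256 * (?r div 256))"
      by (simp only: power_Suc distrib_left mult.left_commute)
    also have "\<dots> = 256^m * ?r" by (simp only: mod_mult_div_eq)
    finally show ?thesis .
  qed
  note H = this
  have "(\<Sum>i<Suc m. 256^i*t i) + (\<Sum>i<Suc m. 256^i*p i)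
     = ((\<Sum>i<m. 256^i*t i) + (\<Sum>i<m. 256^i*p i)) + 256^m*(t m + p m)"
    by (simp add: algebra_simps)
  also have "\<dots> = (\<Sum>i<m. 256^i*((t i+p i+bc t p i) mod 256)) + 256^m * bc t p m + 256^m*(t m + p m)"
    using Suc.IH by simp
  also have "\<dots> = (\<Sum>i<m. 256^i*((t i+p i+bc t p i) mod 256)) + 256^m * ?r"
    by (simp add: algebra_simps)
  also have "\<dots> = (\<Sum>i<m. 256^i*((t i+p i+bc t p i) mod 256)) + 256^m*(?r mod 256) + 256^Suc m*(?r div 256)"
    using H by (simp only: add.assoc)
  also have "\<dots> = (\<Sum>i<Suc m. 256^i*((t i+p i+bc t p i) mod 256)) + 256^Suc m * bc t p (Suc m)"
    by simp
  finally show ?case .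
qed

theorem lemma2:
  fixes \<omega> n :: nat and A B c t p s :: "nat \<Rightarrow> nat"
  assumes "\<omega> \<ge> 1" and "n \<ge> 1"
    and "\<forall>i<n. A i < 2 ^ \<omega> \<and> B i < 2 ^ \<omega>"
    and "c 0 = 0"
    and "\<forall>i<n. c (Suc i) = (A i + B i + c i) div 2 ^ \<omega>"
    and "\<forall>i<n. t i < 256 \<and> p i < 256"
    and "\<forall>i<n. case_of 256 (t i) (p i) = case_of (2 ^ \<omega>) (A i) (B i)"
    and "\<forall>i<n. s i < 256"
    and "(\<Sum>i<n. 256 ^ i * s i) =
         ((\<Sum>i<n. 256 ^ i * t i) + (\<Sum>i<n. 256 ^ i * p i)) mod 256 ^ n"
  shows "\<forall>i<n. (int (s i) - int (t i) - int (p i)) mod 256 = int (c i)"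
proof -
  let ?d = "bc t p"
  let ?r = "\<lambda>i. (t i+p i+?d i) mod 256"
  have R: "(\<Sum>i<n. 256^i * ?r i) < 256^n" by (rule digsum_lt) auto
  have "((\<Sum>i<n. 256 ^ i * t i) + (\<Sum>i<n. 256 ^ i * p i)) mod 256 ^ n
        = (\<Sum>i<n. 256^i * ?r i)"
    unfolding expand using R by simp
  then have "\<forall>i<n. s i = ?r i"
    using digsum_inj[of 256 n s ?r] assms(8,9) by simp
  moreover
  have b2: "(2::nat)^\<omega> \<ge> 2" using assms(1)
    by (metis power_one_right power_increasing nat_le_linear not_one_le_zero zero_less_numeral one_le_numeral)
  have DC: "i \<le> n \<Longrightarrow> ?d i = c i \<and> c i \<le> 1" for i
  proof (induction i)
    case 0 then show ?case using assms(4) by simp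
  next
    case (Suc i)
    then have IH: "?d i = c i" "c i \<le> 1" and i: "i < n" by auto
    have ab: "A i < 2^\<omega>" "B i < 2^\<omega>" and tp: "t i < 256" "p i < 256"
      using assms(3,6) i by auto
    have cs: "c (Suc i) = (A i + B i + c i) div 2^\<omega>" using assms(5) i by auto
    have ds: "?d (Suc i) = (t i + p i + c i) div 256" using IH by simp
    have ce: "case_of 256 (t i) (p i) = case_of (2 ^ \<omega>) (A i) (B i)" using assms(7) i by auto
    show ?case
    proof (cases "A i + B i + 2 \<le> 2^\<omega>")
      case True
      then have "case_of (2 ^ \<omega>) (A i) (B i) = CaseN" by (simp add: case_of_def)
      then have "t i + p i + 2 \<le> 256" using ce by (auto simp: case_of_def split: if_splits)
      then have "(t i + p i + c i) div 256 = 0" using IH by (intro div_less) linarith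
      moreover have "(A i + B i + c i) div 2^\<omega> = 0" using True IH by (intro div_less) linarith
      ultimately show ?thesis using cs ds IH by linarith
    next
      case F1: False
      show ?thesis
      proof (cases "A i + B i + 1 = 2^\<omega>")
        case True
        then have "case_of (2 ^ \<omega>) (A i) (B i) = CaseP" using F1 by (simp add: case_of_def)
        then have "t i + p i + 1 = 256" using ce by (auto simp: case_of_def split: if_splits)
        moreover have "c (Suc i) = c i"
        proof (cases "c i = 0")
          case True
          have "A i + B i + c i < 2^\<omega>" using True \<open>A i + B i + 1 = 2^\<omega>\<close> by linarith
          then have "(A i + B i + c i) div 2^\<omega> = 0" by (rule div_less)
          then show ?thesis using cs True by linarith
        next
          case False
          then have "c i = 1" using IH by simp
          then have "A i + B i + c i = 2^\<omega>" using \<open>A i + B i + 1 = 2^\<omega>\<close> by simp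
          moreover have "(2::nat)^\<omega> div 2^\<omega> = 1" using b2 by (intro div_self) linarith
          ultimately show ?thesis using cs \<open>c i = 1\<close> by metis
        qed
        ultimately show ?thesis using ds IH
          by (cases "c i = 0") auto
      next
        case False
        then have "case_of (2 ^ \<omega>) (A i) (B i) = CaseG" using F1 by (simp add: case_of_def)
        then have "t i + p i \<ge> 256" using ce by (auto simp: case_of_def split: if_splits)
        then have l1: "256 * 1 \<le> t i + p i + c i" by linarith
        have l2': "t i + p i + c i < 512" using tp IH by linarith
        have l2: "t i + p i + c i < 256 * Suc 1" using l2' by (simp only: mult_Suc_right mult_1_right)
        have "(t i + p i + c i) div 256 = 1" using div_nat_eqI[OF l1 l2] .
        then have "?d (Suc i) = 1" using ds by linarith
        moreover have "c (Suc i) = 1"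
        proof -
          have m1: "2^\<omega> * 1 \<le> A i + B i + c i" using F1 False by linarith
          have m2': "A i + B i + c i < 2 * 2^\<omega>" using ab IH by linarith
          have m2: "A i + B i + c i < 2^\<omega> * Suc 1" using m2'
            by (simp only: mult_Suc_right mult_1_right mult_2)
          have "(A i + B i + c i) div 2^\<omega> = 1" using div_nat_eqI[OF m1 m2] .
          then show ?thesis using cs by linarith
        qed
        ultimately show ?thesis by simp
      qed
    qed
  qed
  ultimately show ?thesis
  proof (intro allI impI)
    fix i assume i: "i < n"
    have si: "s i = (t i + p i + c i) mod 256" and ci: "c i \<le> 1"
      using \<open>\<forall>i<n. s i = ?r i\<close> DC[of i] i by auto
    define X where "X = int (t i) + int (p i) + int (c i)"
    have h1: "int (s i) = X mod 256"
      using si unfolding X_def by (simp only: zmod_int of_nat_add of_nat_numeral)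
    have h2: "X mod 256 + 256 * (X div 256) = X" by (rule mod_mult_div_eq)
    have "int (s i) - int (t i) - int (p i) = int (c i) + 256 * (- (X div 256))"
    proof -
      have "int (s i) - int (t i) - int (p i) = X mod 256 - (X - int (c i))"
        using h1 unfolding X_def by simp
      also have "\<dots> = int (c i) + 256 * (- (X div 256))" using minus_mod_eq_mult_div[of X 256] by simp
      finally show ?thesis .
    qed
    then have "(int (s i) - int (t i) - int (p i)) mod 256 = int (c i) mod 256"
      by (simp only: mod_mult_self2)
    also have "\<dots> = int (c i)" using ci by (intro mod_pos_pos_trivial) linarith+
    finally show "(int (s i) - int (t i) - int (p i)) mod 256 = int (c i)" .
  qed
qed

end
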